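(* Let $R$ be a field and $H$ a Hopf algebra over $R$ which is local and cocommutative. Let $S$ be a finite faithful $H$-extension of $R$ with $\mathrm{rank}_R(H)=\mathrm{rank}_R(S)$. Then $S/R$ is a Hopf-Galois extension with $H$ if and only if the Hopfological homology $S^H/IS$ of $S$ is zero.
   Context: $S$ is a finite $H$-extension of $R$ if $S$ is a finite-dimensional $R$-algebra which is a left $H$-module algebra with $S^H=R$, where $S^H=\{s\in S: hs=\varepsilon(h)s\ \forall h\in H\}$; it is faithful if $hs=0$ for all $s\in S$ implies $h=0$. $I=\{\lambda\in H: h\lambda=\varepsilon(h)\lambda\ \forall h\}$ is the set of left integrals and $IS$ is the $R$-subspace spanned by $\lambda s$, $\lambda\in I$, $s\in S$. $S/R$ is a Hopf-Galois extension with $H$ if the map $j:S\# H\to \mathrm{End}_R(S)$, $j(s\otimes h)(t)=s\,h(t)$, is bijective (where $S\#H$ is the smash product over $R$). *)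

theory Defs
  imports Main
begin

text \<open>
  The base field is R = 'k. A finite-dimensional R-vector space
  with basis indexed by a finite type 'a is identified with 'a \<Rightarrow> 'k
  (coefficient vectors). Bilinear/linear structure maps are given by their
  structure constants with respect to the bases; tensor products V \<otimes> W
  are identified with coefficient arrays on the product of index sets.

  H has basis e_a (a :: 'i), S has basis f_p (p :: 'j):
    e_a e_b = sum_c mH a b c e_c,   1_H = sum_c uH c e_c,
    Delta e_a = sum_{b,c} dH a b c e_b (x) e_c,   eps e_a = eH a,
    antipode e_a = sum_b sH a b e_b,
    f_p f_q = sum_r mS p q r f_r,   1_S = sum_r uS r f_r,
    e_a . f_p = sum_q act a p q f_q.
\<close>

definition kdelta :: "'a \<Rightarrow> 'a \<Rightarrow> 'k::field" where
  "kdelta x y = (if x = y then 1 else 0)"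

definition assoc_unital_alg :: "('a::finite \<Rightarrow> 'a \<Rightarrow> 'a \<Rightarrow> 'k::field) \<Rightarrow> ('a \<Rightarrow> 'k) \<Rightarrow> bool" where
  "assoc_unital_alg m u \<longleftrightarrow>
     (\<forall>a b c d. (\<Sum>e\<in>UNIV. m a b e * m e c d) = (\<Sum>e\<in>UNIV. m b c e * m a e d)) \<and>
     (\<forall>a c. (\<Sum>b\<in>UNIV. u b * m b a c) = kdelta a c) \<and>
     (\<forall>a c. (\<Sum>b\<in>UNIV. u b * m a b c) = kdelta a c)"

definition coassoc_counital :: "('a::finite \<Rightarrow> 'a \<Rightarrow> 'a \<Rightarrow> 'k::field) \<Rightarrow> ('a \<Rightarrow> 'k) \<Rightarrow> bool" where
  "coassoc_counital d eps \<longleftrightarrow>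
     (\<forall>a b c f. (\<Sum>e\<in>UNIV. d a e f * d e b c) = (\<Sum>e\<in>UNIV. d a b e * d e c f)) \<and>
     (\<forall>a c. (\<Sum>b\<in>UNIV. d a b c * eps b) = kdelta a c) \<and>
     (\<forall>a b. (\<Sum>c\<in>UNIV. d a b c * eps c) = kdelta a b)"

definition bialg_compat ::
  "('a::finite \<Rightarrow> 'a \<Rightarrow> 'a \<Rightarrow> 'k::field) \<Rightarrow> ('a \<Rightarrow> 'k) \<Rightarrow> ('a \<Rightarrow> 'a \<Rightarrow> 'a \<Rightarrow> 'k) \<Rightarrow> ('a \<Rightarrow> 'k) \<Rightarrow> bool" where
  "bialg_compat m u d eps \<longleftrightarrow>
     (\<forall>a b p q. (\<Sum>c\<in>UNIV. m a b c * d c p q) =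
        (\<Sum>p1\<in>UNIV. \<Sum>q1\<in>UNIV. \<Sum>p2\<in>UNIV. \<Sum>q2\<in>UNIV.
            d a p1 q1 * d b p2 q2 * m p1 p2 p * m q1 q2 q)) \<and>
     (\<forall>p q. (\<Sum>c\<in>UNIV. u c * d c p q) = u p * u q) \<and>
     (\<forall>a b. (\<Sum>c\<in>UNIV. m a b c * eps c) = eps a * eps b) \<and>
     (\<Sum>c\<in>UNIV. u c * eps c) = 1"

definition antipode_ax ::
  "('a::finite \<Rightarrow> 'a \<Rightarrow> 'a \<Rightarrow> 'k::field) \<Rightarrow> ('a \<Rightarrow> 'k) \<Rightarrow> ('a \<Rightarrow> 'a \<Rightarrow> 'a \<Rightarrow> 'k) \<Rightarrow> ('a \<Rightarrow> 'k)
     \<Rightarrow> ('a \<Rightarrow> 'a \<Rightarrow> 'k) \<Rightarrow> bool" where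
  "antipode_ax m u d eps s \<longleftrightarrow>
     (\<forall>a x. (\<Sum>b\<in>UNIV. \<Sum>c\<in>UNIV. \<Sum>b'\<in>UNIV. d a b c * s b b' * m b' c x) = eps a * u x) \<and>
     (\<forall>a x. (\<Sum>b\<in>UNIV. \<Sum>c\<in>UNIV. \<Sum>c'\<in>UNIV. d a b c * s c c' * m b c' x) = eps a * u x)"

definition hopf_algebra ::
  "('a::finite \<Rightarrow> 'a \<Rightarrow> 'a \<Rightarrow> 'k::field) \<Rightarrow> ('a \<Rightarrow> 'k) \<Rightarrow> ('a \<Rightarrow> 'a \<Rightarrow> 'a \<Rightarrow> 'k) \<Rightarrow> ('a \<Rightarrow> 'k)
     \<Rightarrow> ('a \<Rightarrow> 'a \<Rightarrow> 'k) \<Rightarrow> bool" where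
  "hopf_algebra m u d eps s \<longleftrightarrow>
     assoc_unital_alg m u \<and> coassoc_counital d eps \<and> bialg_compat m u d eps \<and> antipode_ax m u d eps s"

definition cocommutative :: "('a \<Rightarrow> 'a \<Rightarrow> 'a \<Rightarrow> 'k) \<Rightarrow> bool" where
  "cocommutative d \<longleftrightarrow> (\<forall>a b c. d a b c = d a c b)"

definition vmult :: "('a::finite \<Rightarrow> 'a \<Rightarrow> 'a \<Rightarrow> 'k::field) \<Rightarrow> ('a \<Rightarrow> 'k) \<Rightarrow> ('a \<Rightarrow> 'k) \<Rightarrow> ('a \<Rightarrow> 'k)" where
  "vmult m x y = (\<lambda>c. \<Sum>a\<in>UNIV. \<Sum>b\<in>UNIV. x a * y b * m a b c)"

definition is_unit_elem :: "('a::finite \<Rightarrow> 'a \<Rightarrow> 'a \<Rightarrow> 'k::field) \<Rightarrow> ('a \<Rightarrow> 'k) \<Rightarrow> ('a \<Rightarrow> 'k) \<Rightarrow> bool" where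
  "is_unit_elem m u x \<longleftrightarrow> (\<exists>y. vmult m x y = u \<and> vmult m y x = u)"

text \<open>Local ring (possibly noncommutative): nonzero, and the non-units are closed under addition
  (equivalently: unique maximal left ideal).\<close>
definition local_alg :: "('a::finite \<Rightarrow> 'a \<Rightarrow> 'a \<Rightarrow> 'k::field) \<Rightarrow> ('a \<Rightarrow> 'k) \<Rightarrow> bool" where
  "local_alg m u \<longleftrightarrow> u \<noteq> (\<lambda>_. 0) \<and>
     (\<forall>x y. \<not> is_unit_elem m u x \<and> \<not> is_unit_elem m u y \<longrightarrow> \<not> is_unit_elem m u (\<lambda>i. x i + y i))"

definition vact :: "('i::finite \<Rightarrow> 'j::finite \<Rightarrow> 'j \<Rightarrow> 'k::field) \<Rightarrow> ('i \<Rightarrow> 'k) \<Rightarrow> ('j \<Rightarrow> 'k) \<Rightarrow> ('j \<Rightarrow> 'k)" where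
  "vact act h s = (\<lambda>t. \<Sum>a\<in>UNIV. \<Sum>p\<in>UNIV. h a * s p * act a p t)"

definition module_algebra ::
  "('i::finite \<Rightarrow> 'i \<Rightarrow> 'i \<Rightarrow> 'k::field) \<Rightarrow> ('i \<Rightarrow> 'k) \<Rightarrow> ('i \<Rightarrow> 'i \<Rightarrow> 'i \<Rightarrow> 'k) \<Rightarrow> ('i \<Rightarrow> 'k)
     \<Rightarrow> ('j::finite \<Rightarrow> 'j \<Rightarrow> 'j \<Rightarrow> 'k) \<Rightarrow> ('j \<Rightarrow> 'k) \<Rightarrow> ('i \<Rightarrow> 'j \<Rightarrow> 'j \<Rightarrow> 'k) \<Rightarrow> bool" where
  "module_algebra mH uH dH eH mS uS act \<longleftrightarrow>
     (\<forall>a b p q. (\<Sum>c\<in>UNIV. mH a b c * act c p q) = (\<Sum>r\<in>UNIV. act b p r * act a r q)) \<and>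
     (\<forall>p q. (\<Sum>c\<in>UNIV. uH c * act c p q) = kdelta p q) \<and>
     (\<forall>a p q t. (\<Sum>r\<in>UNIV. mS p q r * act a r t) =
        (\<Sum>b\<in>UNIV. \<Sum>c\<in>UNIV. \<Sum>x\<in>UNIV. \<Sum>y\<in>UNIV. dH a b c * act b p x * act c q y * mS x y t)) \<and>
     (\<forall>a t. (\<Sum>r\<in>UNIV. uS r * act a r t) = eH a * uS t)"

definition veps :: "('a::finite \<Rightarrow> 'k::field) \<Rightarrow> ('a \<Rightarrow> 'k) \<Rightarrow> 'k" where
  "veps eps h = (\<Sum>a\<in>UNIV. h a * eps a)"

definition invariants :: "('i::finite \<Rightarrow> 'k::field) \<Rightarrow> ('i \<Rightarrow> 'j::finite \<Rightarrow> 'j \<Rightarrow> 'k) \<Rightarrow> ('j \<Rightarrow> 'k) set" where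
  "invariants eH act = {s. \<forall>h. vact act h s = (\<lambda>t. veps eH h * s t)}"

text \<open>The copy R = R 1_S of the base field inside S.\<close>
definition scalars :: "('j \<Rightarrow> 'k::field) \<Rightarrow> ('j \<Rightarrow> 'k) set" where
  "scalars uS = {v. \<exists>c. v = (\<lambda>t. c * uS t)}"

text \<open>S is a finite H-extension of R: finite-dim R-algebra (automatic: 'j finite),
  left H-module algebra, and S^H = R.\<close>
definition H_extension ::
  "('i::finite \<Rightarrow> 'i \<Rightarrow> 'i \<Rightarrow> 'k::field) \<Rightarrow> ('i \<Rightarrow> 'k) \<Rightarrow> ('i \<Rightarrow> 'i \<Rightarrow> 'i \<Rightarrow> 'k) \<Rightarrow> ('i \<Rightarrow> 'k)
     \<Rightarrow> ('j::finite \<Rightarrow> 'j \<Rightarrow> 'j \<Rightarrow> 'k) \<Rightarrow> ('j \<Rightarrow> 'k) \<Rightarrow> ('i \<Rightarrow> 'j \<Rightarrow> 'j \<Rightarrow> 'k) \<Rightarrow> bool" where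
  "H_extension mH uH dH eH mS uS act \<longleftrightarrow>
     assoc_unital_alg mS uS \<and> module_algebra mH uH dH eH mS uS act \<and>
     invariants eH act = scalars uS"

definition faithful_action :: "('i::finite \<Rightarrow> 'j::finite \<Rightarrow> 'j \<Rightarrow> 'k::field) \<Rightarrow> bool" where
  "faithful_action act \<longleftrightarrow> (\<forall>h. (\<forall>s. vact act h s = (\<lambda>_. 0)) \<longrightarrow> h = (\<lambda>_. 0))"

definition left_integrals :: "('i::finite \<Rightarrow> 'i \<Rightarrow> 'i \<Rightarrow> 'k::field) \<Rightarrow> ('i \<Rightarrow> 'k) \<Rightarrow> ('i \<Rightarrow> 'k) set" where
  "left_integrals mH eH = {lam. \<forall>h. vmult mH h lam = (\<lambda>c. veps eH h * lam c)}"

text \<open>IS: the R-subspace of S spanned by all lam s, lam \<in> I, s \<in> S.\<close>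
definition integral_image ::
  "('i::finite \<Rightarrow> 'i \<Rightarrow> 'i \<Rightarrow> 'k::field) \<Rightarrow> ('i \<Rightarrow> 'k) \<Rightarrow> ('i \<Rightarrow> 'j::finite \<Rightarrow> 'j \<Rightarrow> 'k) \<Rightarrow> ('j \<Rightarrow> 'k) set" where
  "integral_image mH eH act =
     {v. \<exists>(n::nat) lam s. (\<forall>i<n. lam i \<in> left_integrals mH eH) \<and>
                          v = (\<lambda>t. \<Sum>i<n. vact act (lam i) (s i) t)}"

text \<open>The map j : S # H \<rightarrow> End_R(S), j(s (x) h)(t) = s h(t). An element of S (x) H is a
  coefficient array on 'j \<times> 'i; an endomorphism is a matrix M, M q t being the
  f_t-coefficient of the image of f_q.\<close>
definition galois_map ::
  "('j::finite \<Rightarrow> 'j \<Rightarrow> 'j \<Rightarrow> 'k::field) \<Rightarrow> ('i::finite \<Rightarrow> 'j \<Rightarrow> 'j \<Rightarrow> 'k)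
     \<Rightarrow> ('j \<times> 'i \<Rightarrow> 'k) \<Rightarrow> ('j \<Rightarrow> 'j \<Rightarrow> 'k)" where
  "galois_map mS act z = (\<lambda>q t. \<Sum>p\<in>UNIV. \<Sum>a\<in>UNIV. z (p, a) * (\<Sum>r\<in>UNIV. act a q r * mS p r t))"

definition hopf_galois :: "('j::finite \<Rightarrow> 'j \<Rightarrow> 'j \<Rightarrow> 'k::field) \<Rightarrow> ('i::finite \<Rightarrow> 'j \<Rightarrow> 'j \<Rightarrow> 'k) \<Rightarrow> bool" where
  "hopf_galois mS act \<longleftrightarrow> bij (galois_map mS act)"

definition hopfological_homology_zero ::
  "('i::finite \<Rightarrow> 'i \<Rightarrow> 'i \<Rightarrow> 'k::field) \<Rightarrow> ('i \<Rightarrow> 'k) \<Rightarrow> ('i \<Rightarrow> 'j::finite \<Rightarrow> 'j \<Rightarrow> 'k) \<Rightarrow> bool" where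
  "hopfological_homology_zero mH eH act \<longleftrightarrow> invariants eH act = integral_image mH eH act"

end

theory Submission
  imports Defs "HOL-Library.Function_Algebras" HOL.Vector_Spaces
begin


definition vsc :: "'k::field \<Rightarrow> ('m \<Rightarrow> 'k) \<Rightarrow> ('m \<Rightarrow> 'k)" where
  "vsc c f = (\<lambda>x. c * f x)"

lemma sum_apply: "(sum f A) x = (\<Sum>i\<in>A. f i x)"
  by (induction A rule: infinite_finite_induct) auto

definition dlt :: "'m \<Rightarrow> 'm \<Rightarrow> 'k::field" where "dlt i = (\<lambda>j. if j = i then 1 else 0)"

lemma vs_fun: "vector_space (vsc :: 'k::field \<Rightarrow> ('m \<Rightarrow> 'k) \<Rightarrow> ('m \<Rightarrow> 'k))"
  by unfold_locales (auto simp: vsc_def fun_eq_iff algebra_simps)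

interpretation fv: vector_space "vsc :: 'k::field \<Rightarrow> ('m \<Rightarrow> 'k) \<Rightarrow> ('m \<Rightarrow> 'k)"
  by (rule vs_fun)

lemma fun_expand: "(f::'m::finite \<Rightarrow> 'k::field) = (\<Sum>i\<in>UNIV. vsc (f i) (dlt i))"
proof
  fix x show "f x = (\<Sum>i\<in>UNIV. vsc (f i) (dlt i)) x"
    by (simp add: vsc_def dlt_def sum_apply if_distrib cong: if_cong)
qed

interpretation fdv: finite_dimensional_vector_space "vsc :: 'k::field \<Rightarrow> ('m::finite \<Rightarrow> 'k) \<Rightarrow> ('m \<Rightarrow> 'k)" "range dlt"
proof
  show "finite (range (dlt :: 'm \<Rightarrow> 'm \<Rightarrow> 'k))" by simp
  show "fv.independent (range (dlt :: 'm \<Rightarrow> 'm \<Rightarrow> 'k))"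
  proof
    assume "fv.dependent (range (dlt :: 'm \<Rightarrow> 'm \<Rightarrow> 'k))"
    then obtain t u v where t: "finite t" "t \<subseteq> range (dlt :: 'm \<Rightarrow> 'm \<Rightarrow> 'k)" and s: "(\<Sum>v\<in>t. vsc (u v) v) = 0"
      and vt: "v \<in> t" and nz0: "u v \<noteq> 0" unfolding fv.dependent_explicit by blast
    then obtain i where vi: "v = dlt i" by auto
    have it: "dlt i \<in> t" and nz: "u (dlt i) \<noteq> 0" using vt nz0 vi by auto
    have "(\<Sum>v\<in>t. vsc (u v) v) i = u (dlt i)"
    proof -
      have "(\<Sum>v\<in>t. vsc (u v) v) i = (\<Sum>v\<in>t. u v * v i)" by (simp add: sum_apply vsc_def)
      also have "\<dots> = (\<Sum>v\<in>{dlt i}. u v * v i)"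
      proof (rule sum.mono_neutral_right[OF t(1)])
        show "{dlt i} \<subseteq> t" using it by auto
        show "\<forall>v\<in>t - {dlt i}. u v * v i = 0"
        proof
          fix v assume "v \<in> t - {dlt i}"
          then obtain j where "v = dlt j" "j \<noteq> i" using t by auto
          then show "u v * v i = 0" by (simp add: dlt_def)
        qed
      qed
      also have "\<dots> = u (dlt i)" by (simp add: dlt_def)
      finally show ?thesis .
    qed
    with s nz show False by simp
  qed
  show "fv.span (range (dlt :: 'm \<Rightarrow> 'm \<Rightarrow> 'k)) = UNIV"
  proof (rule set_eqI, simp)
    fix f :: "'m \<Rightarrow> 'k"
    have "(\<Sum>i\<in>UNIV. vsc (f i) (dlt i)) \<in> fv.span (range dlt)"
      by (intro fv.span_sum fv.span_scale fv.span_base) auto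
    then show "f \<in> fv.span (range dlt)" using fun_expand[of f] by simp
  qed
qed

lemma inj_dlt: "inj (dlt :: 'm \<Rightarrow> 'm \<Rightarrow> 'k::field)"
  by (rule injI) (auto simp: dlt_def fun_eq_iff split: if_splits)

lemma fdv_dim: "fv.dim (UNIV :: ('m::finite \<Rightarrow> 'k::field) set) = card (UNIV :: 'm set)"
  using fdv.dim_UNIV card_image[OF inj_dlt] by (metis)

definition pr :: "('m::finite \<Rightarrow> 'k::field) \<Rightarrow> ('m \<Rightarrow> 'k) \<Rightarrow> 'k" where
  "pr t w = (\<Sum>q\<in>UNIV. t q * w q)"

lemma pr_sub_zero: "fv.subspace {w. pr d w = 0}"
  unfolding fv.subspace_def by (auto simp: pr_def vsc_def algebra_simps sum.distrib sum_distrib_left[symmetric])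

lemma annih_full:
  fixes W :: "('m::finite \<Rightarrow> 'k::field) set"
  assumes sW: "fv.subspace W"
  and ann: "\<And>t. (\<forall>w\<in>W. pr t w = 0) \<Longrightarrow> t = 0"
  shows "W = UNIV"
proof -
  obtain B where B: "B \<subseteq> W" "fv.independent B" "W \<subseteq> fv.span B" "card B = fv.dim W"
    using fv.basis_exists by blast
  have fB: "finite B" using fdv.finiteI_independent[OF B(2)] .
  have "card B \<le> card (UNIV :: 'm set)" using B(4) fdv.dim_subset[OF subset_UNIV, of W] fdv_dim[where 'k='k and 'm='m] by linarith
  then obtain e :: "('m \<Rightarrow> 'k) \<Rightarrow> 'm" where e: "inj_on e B"
    using card_le_inj[OF fB, of "UNIV :: 'm set"] by auto
  define \<Phi> where "\<Phi> t = (\<lambda>q. if q \<in> e ` B then pr t (the_inv_into B e q) else 0)" for t :: "'m \<Rightarrow> 'k"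
  have lin: "Vector_Spaces.linear vsc vsc \<Phi>"
    unfolding Vector_Spaces.linear_iff
  proof (intro conjI allI vs_fun)
    fix x y show "\<Phi> (x + y) = \<Phi> x + \<Phi> y"
      by (auto simp: \<Phi>_def pr_def fun_eq_iff algebra_simps sum.distrib)
  next
    fix c x show "\<Phi> (vsc c x) = vsc c (\<Phi> x)"
      by (auto simp: \<Phi>_def pr_def vsc_def fun_eq_iff algebra_simps sum_distrib_left)
  qed
  have Phib: "\<Phi> t (e b) = pr t b" if "b \<in> B" for t b
    using that e by (simp add: \<Phi>_def the_inv_into_f_f)
  have inj: "inj \<Phi>"
  proof (rule injI)
    fix x y assume xy: "\<Phi> x = \<Phi> y"
    define d where "d = x - y"
    have "\<forall>b\<in>B. pr d b = 0"
    proof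
      fix b assume "b \<in> B"
      then have "pr x b = pr y b" using Phib xy by metis
      then show "pr d b = 0" by (simp add: d_def pr_def algebra_simps sum_subtractf)
    qed
    then have "B \<subseteq> {w. pr d w = 0}" by auto
    then have "fv.span B \<subseteq> {w. pr d w = 0}" using fv.span_minimal pr_sub_zero by blast
    then have "\<forall>w\<in>W. pr d w = 0" using B(3) by auto
    then have "d = 0" by (rule ann)
    then show "x = y" by (simp add: d_def)
  qed
  have surj: "surj \<Phi>" by (rule fdv.linear_inj_imp_surj[OF lin inj])
  have eB: "e ` B = UNIV"
  proof (rule ccontr)
    assume "e ` B \<noteq> UNIV"
    then obtain q where q: "q \<notin> e ` B" by auto
    obtain t where "\<Phi> t = dlt q" using surj by (metis surj_def)
    then have "\<Phi> t q = dlt q q" by simp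
    then show False using q by (simp add: \<Phi>_def dlt_def)
  qed
  have cB: "card B = card (UNIV :: 'm set)" using card_image[OF e] eB by simp
  have "fv.dim W = fv.dim (UNIV :: ('m \<Rightarrow> 'k) set)" using B(4) fdv_dim[where 'k='k and 'm='m] cB by linarith
  then have "fv.span W = fv.span UNIV" using fdv.dim_eq_span[of W UNIV] by simp
  then show ?thesis using sW fv.span_eq_iff[of W] by simp
qed



lemma vmult_assoc:
  assumes "assoc_unital_alg m u"
  shows "vmult m (vmult m x y) z = vmult m x (vmult m y z)"
proof
  fix d
  have ax: "\<And>a b c. (\<Sum>e\<in>UNIV. m a b e * m e c d) = (\<Sum>e\<in>UNIV. m b c e * m a e d)"
    using assms unfolding assoc_unital_alg_def by blast
  have "vmult m (vmult m x y) z d = (\<Sum>a\<in>UNIV. \<Sum>b\<in>UNIV. \<Sum>c\<in>UNIV. x a * y b * z c * (\<Sum>e\<in>UNIV. m a b e * m e c d))"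
    apply (simp add: vmult_def sum_distrib_left sum_distrib_right)
    apply (simp only: sum.cartesian_product UNIV_Times_UNIV)
    apply (rule sum.reindex_bij_witness[where i="\<lambda>(a,b,c,e). (e,c,a,b)" and j="\<lambda>(e,c,a,b). (a,b,c,e)"])
    apply (auto simp: mult_ac)
    done
  also have "\<dots> = (\<Sum>a\<in>UNIV. \<Sum>b\<in>UNIV. \<Sum>c\<in>UNIV. x a * y b * z c * (\<Sum>e\<in>UNIV. m b c e * m a e d))"
    by (simp only: ax)
  also have "\<dots> = vmult m x (vmult m y z) d"
    apply (simp add: vmult_def sum_distrib_left sum_distrib_right)
    apply (simp only: sum.cartesian_product UNIV_Times_UNIV)
    apply (rule sum.reindex_bij_witness[where i="\<lambda>(a,e,b,c). (a,b,c,e)" and j="\<lambda>(a,b,c,e). (a,e,b,c)"])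
    apply (auto simp: mult_ac)
    done
  finally show "vmult m (vmult m x y) z d = vmult m x (vmult m y z) d" .
qed

lemma kdelta_sum1: "(\<Sum>b\<in>UNIV. v b * kdelta b c) = (v (c::'a::finite) :: 'k::field)"
proof -
  have "\<And>b. v b * kdelta b c = (if b = c then v c else 0)" by (simp add: kdelta_def)
  then show ?thesis by (simp add: sum.delta)
qed
lemma kdelta_sum2: "(\<Sum>b\<in>UNIV. kdelta b c * v b) = (v (c::'a::finite) :: 'k::field)"
  using kdelta_sum1[of v c] by (simp add: mult.commute)

lemma vmult_unit_left:
  assumes "assoc_unital_alg m u"
  shows "vmult m u v = v"
proof
  fix c
  have ax: "\<And>a. (\<Sum>b\<in>UNIV. u b * m b a c) = kdelta a c"
    using assms unfolding assoc_unital_alg_def by blast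
  have "vmult m u v c = (\<Sum>b\<in>UNIV. v b * (\<Sum>a\<in>UNIV. u a * m a b c))"
    apply (simp add: vmult_def sum_distrib_left)
    apply (subst sum.swap) apply (simp add: mult_ac)
    done
  also have "\<dots> = v c" by (simp add: ax kdelta_sum1)
  finally show "vmult m u v c = v c" .
qed

lemma vmult_unit_right:
  assumes "assoc_unital_alg m u"
  shows "vmult m v u = v"
proof
  fix c
  have ax: "\<And>a. (\<Sum>b\<in>UNIV. u b * m a b c) = kdelta a c"
    using assms unfolding assoc_unital_alg_def by blast
  have "vmult m v u c = (\<Sum>a\<in>UNIV. v a * (\<Sum>b\<in>UNIV. u b * m a b c))"
    by (simp add: vmult_def sum_distrib_left mult_ac)
  also have "\<dots> = v c" by (simp add: ax kdelta_sum1)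
  finally show "vmult m v u c = v c" .
qed

lemma vmult_add1: "vmult m (x + y) z = vmult m x z + vmult m y z"
  by (simp add: vmult_def fun_eq_iff algebra_simps sum.distrib)
lemma vmult_sc1: "vmult m (vsc c x) z = vsc c (vmult m x z)"
  by (simp add: vmult_def vsc_def fun_eq_iff algebra_simps sum_distrib_left)
lemma vmult_zero2: "vmult m x 0 = 0"
  by (simp add: vmult_def fun_eq_iff)

lemma veps_add: "veps e (x + y) = veps e x + veps e y"
  by (simp add: veps_def algebra_simps sum.distrib)
lemma veps_diff: "veps e (x - y) = veps e x - veps e y"
  by (simp add: veps_def algebra_simps sum_subtractf)
lemma veps_sc: "veps e (vsc c x) = c * veps e x"
  by (simp add: veps_def vsc_def algebra_simps sum_distrib_left)

lemma veps_mult: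
  assumes "bialg_compat m u d e"
  shows "veps e (vmult m x y) = veps e x * veps e y"
proof -
  have ax: "\<And>a b. (\<Sum>c\<in>UNIV. m a b c * e c) = e a * e b"
    using assms unfolding bialg_compat_def by blast
  have "veps e (vmult m x y) = (\<Sum>a\<in>UNIV. \<Sum>b\<in>UNIV. x a * y b * (\<Sum>c\<in>UNIV. m a b c * e c))"
    apply (simp add: veps_def vmult_def sum_distrib_left sum_distrib_right)
    apply (simp only: sum.cartesian_product UNIV_Times_UNIV)
    apply (rule sum.reindex_bij_witness[where i="\<lambda>(a,b,c). (c,a,b)" and j="\<lambda>(c,a,b). (a,b,c)"])
    apply (auto simp: mult_ac)
    done
  also have "\<dots> = veps e x * veps e y"
    by (simp only: ax) (simp add: veps_def sum_product mult_ac)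
  finally show ?thesis .
qed

lemma veps_unit:
  assumes "bialg_compat m u d e"
  shows "veps e u = 1"
  using assms unfolding bialg_compat_def veps_def by blast

lemma local_inv:
  assumes A: "assoc_unital_alg m u" and B: "bialg_compat m u d e"
    and L: "local_alg m u" and y: "veps e y = 0"
  shows "\<exists>w. vmult m w (u - y) = u"
proof -
  have ny: "\<not> is_unit_elem m u y"
  proof
    assume "is_unit_elem m u y"
    then obtain z where "vmult m y z = u" unfolding is_unit_elem_def by blast
    then have "veps e (vmult m y z) = 1" using veps_unit[OF B] by simp
    then show False using veps_mult[OF B] y by simp
  qed
  have uu: "is_unit_elem m u u" unfolding is_unit_elem_def using vmult_unit_left[OF A] by blast
  have "is_unit_elem m u (u - y)"
  proof (rule ccontr)
    assume "\<not> is_unit_elem m u (u - y)"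
    then have "\<not> is_unit_elem m u (\<lambda>i. (u - y) i + y i)" using L ny unfolding local_alg_def by blast
    moreover have "(\<lambda>i. (u - y) i + y i) = u" by (simp add: fun_eq_iff)
    ultimately show False using uu by simp
  qed
  then show ?thesis unfolding is_unit_elem_def by blast
qed

lemma vact_mult:
  assumes "module_algebra mH uH dH eH mS uS act"
  shows "vact act (vmult mH h g) v = vact act h (vact act g v)"
proof
  fix t
  have ax: "\<And>a b p. (\<Sum>c\<in>UNIV. mH a b c * act c p t) = (\<Sum>r\<in>UNIV. act b p r * act a r t)"
    using assms unfolding module_algebra_def by blast
  have "vact act (vmult mH h g) v t = (\<Sum>a\<in>UNIV. \<Sum>b\<in>UNIV. \<Sum>p\<in>UNIV. h a * g b * v p * (\<Sum>c\<in>UNIV. mH a b c * act c p t))"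
    apply (simp add: vact_def vmult_def sum_distrib_left sum_distrib_right)
    apply (simp only: sum.cartesian_product UNIV_Times_UNIV)
    apply (rule sum.reindex_bij_witness[where i="\<lambda>(a,b,p,c). (c,p,a,b)" and j="\<lambda>(c,p,a,b). (a,b,p,c)"])
    apply (auto simp: mult_ac)
    done
  also have "\<dots> = (\<Sum>a\<in>UNIV. \<Sum>b\<in>UNIV. \<Sum>p\<in>UNIV. h a * g b * v p * (\<Sum>r\<in>UNIV. act b p r * act a r t))"
    by (simp only: ax)
  also have "\<dots> = vact act h (vact act g v) t"
    apply (simp add: vact_def sum_distrib_left sum_distrib_right)
    apply (simp only: sum.cartesian_product UNIV_Times_UNIV)
    apply (rule sum.reindex_bij_witness[where j="\<lambda>(a,b,p,r). (a,r,b,p)" and i="\<lambda>(a,r,b,p). (a,b,p,r)"])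
    apply (auto simp: mult_ac)
    done
  finally show "vact act (vmult mH h g) v t = vact act h (vact act g v) t" .
qed

lemma vact_unit:
  assumes "module_algebra mH uH dH eH mS uS act"
  shows "vact act uH v = v"
proof
  fix t
  have ax: "\<And>p. (\<Sum>c\<in>UNIV. uH c * act c p t) = kdelta p t"
    using assms unfolding module_algebra_def by blast
  have "vact act uH v t = (\<Sum>p\<in>UNIV. v p * (\<Sum>c\<in>UNIV. uH c * act c p t))"
    apply (simp add: vact_def sum_distrib_left)
    apply (subst sum.swap) apply (simp add: mult_ac)
    done
  also have "\<dots> = v t" by (simp add: ax kdelta_sum1)
  finally show "vact act uH v t = v t" .
qed

lemma vact_add1: "vact act (x + y) z = vact act x z + vact act y z"
  by (simp add: vact_def fun_eq_iff algebra_simps sum.distrib)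
lemma vact_sc1: "vact act (vsc c x) z = vsc c (vact act x z)"
  by (simp add: vact_def vsc_def fun_eq_iff algebra_simps sum_distrib_left)
lemma vact_add2: "vact act x (y + z) = vact act x y + vact act x z"
  by (simp add: vact_def fun_eq_iff algebra_simps sum.distrib)
lemma vact_sc2: "vact act x (vsc c z) = vsc c (vact act x z)"
  by (simp add: vact_def vsc_def fun_eq_iff algebra_simps sum_distrib_left)
lemma vact_zero2: "vact act x 0 = 0"
  by (simp add: vact_def fun_eq_iff)


lemma fixed_vec:
  fixes op :: "('i::finite \<Rightarrow> 'k::field) \<Rightarrow> ('m::finite \<Rightarrow> 'k) \<Rightarrow> ('m \<Rightarrow> 'k)"
    and mH :: "'i \<Rightarrow> 'i \<Rightarrow> 'i \<Rightarrow> 'k"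
  assumes op_add: "\<And>h g v. op (h + g) v = op h v + op g v"
   and op_sc: "\<And>c h v. op (vsc c h) v = vsc c (op h v)"
   and op_zero: "\<And>h. op h 0 = 0"
   and op_mult: "\<And>h g v. op (vmult mH h g) v = op h (op g v)"
   and op_unit: "\<And>v. op uH v = v"
   and unitinv: "\<And>y. veps eH y = 0 \<Longrightarrow> \<exists>w. vmult mH w (uH - y) = uH"
   and eps_mult: "\<And>h g. veps eH (vmult mH h g) = veps eH h * veps eH g"
   and eps_unit: "veps eH uH = 1"
   and Vsub: "fv.subspace V" and Vst: "\<And>h v. v \<in> V \<Longrightarrow> op h v \<in> V"
   and v0: "v0 \<in> V" "v0 \<noteq> 0"
  shows "\<exists>v\<in>V. v \<noteq> 0 \<and> (\<forall>h. op h v = vsc (veps eH h) v)"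
proof -
  define Orb where "Orb v = range (\<lambda>h. op h v)" for v
  have op_diff: "op (h - g) v = op h v - op g v" for h g v
    using op_add[of "h - g" g v] by (simp add: algebra_simps)
  have vsc0: "vsc 0 h = 0" for h :: "'i \<Rightarrow> 'k" by (simp add: vsc_def fun_eq_iff)
  have op0: "op 0 v = 0" for v
  proof -
    have "op 0 v = op (vsc 0 0) v" by (simp add: vsc0)
    also have "\<dots> = vsc 0 (op 0 v)" by (rule op_sc)
    also have "\<dots> = 0" by (simp add: vsc_def fun_eq_iff)
    finally show ?thesis .
  qed
  have subO: "fv.subspace (Orb v)" for v
    unfolding fv.subspace_def Orb_def
  proof (intro conjI ballI allI)
    show "0 \<in> range (\<lambda>h. op h v)" using op0[of v] by (metis rangeI)
  next
    fix x y assume "x \<in> range (\<lambda>h. op h v)" "y \<in> range (\<lambda>h. op h v)"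
    then obtain h g where "x = op h v" "y = op g v" by auto
    then show "x + y \<in> range (\<lambda>h. op h v)" using op_add[of h g v] by (metis rangeI)
  next
    fix c x assume "x \<in> range (\<lambda>h. op h v)"
    then obtain h where "x = op h v" by auto
    then show "vsc c x \<in> range (\<lambda>h. op h v)" using op_sc[of c h v] by (metis rangeI)
  qed
  obtain v where v: "v \<in> V" "v \<noteq> 0" and vmin: "\<And>w. w \<in> V \<Longrightarrow> w \<noteq> 0 \<Longrightarrow> fv.dim (Orb v) \<le> fv.dim (Orb w)"
    using ex_has_least_nat[of "\<lambda>w. w \<in> V \<and> w \<noteq> 0" v0 "\<lambda>w. fv.dim (Orb w)"] v0 by blast
  have kill: "op x v = 0" if x: "veps eH x = 0" for x
  proof (rule ccontr)
    assume w0: "op x v \<noteq> 0"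
    define w where "w = op x v"
    have wV: "w \<in> V" using Vst v(1) w_def by simp
    have sub: "Orb w \<subseteq> Orb v"
    proof
      fix z assume "z \<in> Orb w"
      then obtain h where "z = op h w" unfolding Orb_def by auto
      then have "z = op (vmult mH h x) v" by (simp add: op_mult w_def)
      then show "z \<in> Orb v" unfolding Orb_def by simp
    qed
    have "fv.dim (Orb v) \<le> fv.dim (Orb w)" using vmin wV w0 w_def by simp
    then have "fv.span (Orb w) = fv.span (Orb v)" using fdv.dim_eq_span[OF sub] by simp
    then have eq: "Orb w = Orb v" using subO fv.span_eq_iff by metis
    have "v \<in> Orb v" unfolding Orb_def using op_unit[of v] by (metis rangeI)
    then obtain h where hv: "v = op h w" using eq unfolding Orb_def by auto
    define y where "y = vmult mH h x"
    have vy: "v = op y v" using hv by (simp add: y_def op_mult w_def)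
    have ey: "veps eH y = 0" using eps_mult x y_def by simp
    obtain u where u: "vmult mH u (uH - y) = uH" using unitinv[OF ey] by blast
    have "op (uH - y) v = 0" using op_diff[of uH y v] op_unit[of v] vy by simp
    then have "op uH v = 0" using op_mult[of u "uH - y" v] u op_zero by simp
    then show False using op_unit[of v] v(2) by simp
  qed
  have "op h v = vsc (veps eH h) v" for h
  proof -
    define r where "r = h - vsc (veps eH h) uH"
    have hr: "h = vsc (veps eH h) uH + r" by (simp add: r_def)
    have "veps eH r = 0" by (simp add: r_def veps_diff veps_sc eps_unit)
    then have "op r v = 0" by (rule kill)
    have "op h v = op (vsc (veps eH h) uH) v + op r v" using hr op_add by metis
    also have "\<dots> = vsc (veps eH h) v" using \<open>op r v = 0\<close> op_sc op_unit by simp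
    finally show ?thesis .
  qed
  then show ?thesis using v by blast
qed



definition mm :: "('j::finite \<Rightarrow> 'j \<Rightarrow> 'k::field) \<Rightarrow> ('j \<Rightarrow> 'j \<Rightarrow> 'k) \<Rightarrow> ('j \<Rightarrow> 'j \<Rightarrow> 'k)" where
  "mm A B = (\<lambda>q t. \<Sum>r\<in>UNIV. A q r * B r t)"

definition gm :: "('j::finite \<Rightarrow> 'j \<Rightarrow> 'j \<Rightarrow> 'k::field) \<Rightarrow> ('i::finite \<Rightarrow> 'j \<Rightarrow> 'j \<Rightarrow> 'k) \<Rightarrow> 'j \<Rightarrow> 'i \<Rightarrow> ('j \<Rightarrow> 'j \<Rightarrow> 'k)" where
  "gm mS act p a = mm (act a) (mS p)"

lemma mm_assoc: "mm (mm A B) C = mm A (mm B C)"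
proof (intro ext)
  fix q t
  show "mm (mm A B) C q t = mm A (mm B C) q t"
    apply (simp add: mm_def sum_distrib_left sum_distrib_right)
    apply (subst sum.swap) apply (simp add: mult_ac)
    done
qed

lemma mm_sum_left: "mm (\<lambda>q t. \<Sum>x\<in>X. F x q t) B = (\<lambda>q t. \<Sum>x\<in>X. mm (F x) B q t)"
  apply (simp add: mm_def sum_distrib_right fun_eq_iff)
  apply (intro allI, subst sum.swap, simp)
  done
lemma mm_sum_right: "mm A (\<lambda>q t. \<Sum>x\<in>X. F x q t) = (\<lambda>q t. \<Sum>x\<in>X. mm A (F x) q t)"
  apply (simp add: mm_def sum_distrib_left fun_eq_iff)
  apply (intro allI, subst sum.swap, simp)
  done
lemma mm_sc_left: "mm (\<lambda>q t. c * A q t) B = (\<lambda>q t. c * mm A B q t)"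
  by (simp add: mm_def sum_distrib_left mult_ac)
lemma mm_sc_right: "mm A (\<lambda>q t. c * B q t) = (\<lambda>q t. c * mm A B q t)"
  by (simp add: mm_def sum_distrib_left mult_ac)

definition Aset :: "('j::finite \<Rightarrow> 'j \<Rightarrow> 'j \<Rightarrow> 'k::field) \<Rightarrow> ('i::finite \<Rightarrow> 'j \<Rightarrow> 'j \<Rightarrow> 'k) \<Rightarrow> ('j \<Rightarrow> 'j \<Rightarrow> 'k) set" where
  "Aset mS act = range (galois_map mS act)"

lemma galois_gm: "galois_map mS act z = (\<lambda>q t. \<Sum>p\<in>UNIV. \<Sum>a\<in>UNIV. z (p, a) * gm mS act p a q t)"
  by (simp add: galois_map_def gm_def mm_def)

lemma swap3: "(\<Sum>x\<in>X. \<Sum>j\<in>J. \<Sum>i\<in>I. g x i j) = (\<Sum>i\<in>I. \<Sum>j\<in>J. \<Sum>x\<in>X. g x i j)"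
proof -
  have "(\<Sum>x\<in>X. \<Sum>j\<in>J. \<Sum>i\<in>I. g x i j) = (\<Sum>j\<in>J. \<Sum>x\<in>X. \<Sum>i\<in>I. g x i j)" by (rule sum.swap)
  also have "\<dots> = (\<Sum>j\<in>J. \<Sum>i\<in>I. \<Sum>x\<in>X. g x i j)" by (rule sum.cong[OF refl], rule sum.swap)
  also have "\<dots> = (\<Sum>i\<in>I. \<Sum>j\<in>J. \<Sum>x\<in>X. g x i j)" by (rule sum.swap)
  finally show ?thesis .
qed

lemma rot3: "(\<Sum>x\<in>X. \<Sum>j\<in>J. \<Sum>i\<in>I. g x j i) = (\<Sum>j\<in>J. \<Sum>i\<in>I. \<Sum>x\<in>X. g x j i)"
proof -
  have "(\<Sum>x\<in>X. \<Sum>j\<in>J. \<Sum>i\<in>I. g x j i) = (\<Sum>j\<in>J. \<Sum>x\<in>X. \<Sum>i\<in>I. g x j i)" by (rule sum.swap)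
  also have "\<dots> = (\<Sum>j\<in>J. \<Sum>i\<in>I. \<Sum>x\<in>X. g x j i)" by (rule sum.cong[OF refl], rule sum.swap)
  finally show ?thesis .
qed

lemma Aset_sum:
  assumes "finite X" "\<And>x. x \<in> X \<Longrightarrow> F x \<in> Aset mS act"
  shows "(\<lambda>q t. \<Sum>x\<in>X. F x q t) \<in> Aset mS act"
proof -
  have "\<forall>x\<in>X. \<exists>z. F x = galois_map mS act z" using assms(2) unfolding Aset_def by blast
  then have "\<exists>z. \<forall>x\<in>X. F x = galois_map mS act (z x)" by (rule bchoice)
  then obtain z where z0: "\<forall>x\<in>X. F x = galois_map mS act (z x)" by (elim exE)
  then have z: "\<And>x. x \<in> X \<Longrightarrow> F x = galois_map mS act (z x)" by blast
  have "(\<lambda>q t. \<Sum>x\<in>X. F x q t) = galois_map mS act (\<lambda>pa. \<Sum>x\<in>X. z x pa)"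
  proof (intro ext)
    fix q t
    have "(\<Sum>x\<in>X. F x q t) = (\<Sum>x\<in>X. galois_map mS act (z x) q t)" using z by simp
    also have "\<dots> = galois_map mS act (\<lambda>pa. \<Sum>x\<in>X. z x pa) q t"
      apply (simp add: galois_map_def sum_distrib_right)
      apply (rule rot3)
      done
    finally show "(\<Sum>x\<in>X. F x q t) = galois_map mS act (\<lambda>pa. \<Sum>x\<in>X. z x pa) q t" .
  qed
  then show ?thesis unfolding Aset_def by simp
qed

lemma Aset_sc:
  assumes "F \<in> Aset mS act"
  shows "(\<lambda>q t. c * F q t) \<in> Aset mS act"
proof -
  obtain z where z: "F = galois_map mS act z" using assms unfolding Aset_def by auto
  have "(\<lambda>q t. c * F q t) = galois_map mS act (\<lambda>pa. c * z pa)"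
    by (simp add: z galois_map_def sum_distrib_left mult_ac)
  then show ?thesis unfolding Aset_def by simp
qed

lemma if10_mult: "(if P then 1 else 0) * (x::'a::semiring_1) = (if P then x else 0)" by simp

lemma gm_in: "gm mS act p a \<in> Aset mS act"
proof -
  have "galois_map mS act (\<lambda>pa. if pa = (p, a) then 1 else 0) = gm mS act p a"
  proof (intro ext)
    fix q t
    have "galois_map mS act (\<lambda>pa. if pa = (p, a) then 1 else 0) q t
       = (\<Sum>p'\<in>UNIV. if p' = p then (\<Sum>a'\<in>UNIV. if a' = a then gm mS act p' a' q t else 0) else 0)"
      unfolding galois_gm by (rule sum.cong) (auto simp: if10_mult)
    also have "\<dots> = gm mS act p a q t" by (simp add: sum.delta)
    finally show "galois_map mS act (\<lambda>pa. if pa = (p, a) then 1 else 0) q t = gm mS act p a q t" .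
  qed
  then show ?thesis unfolding Aset_def by (metis rangeI)
qed

lemma lift_left:
  assumes "\<And>p a. mm X (gm mS act p a) \<in> Aset mS act" and "M \<in> Aset mS act"
  shows "mm X M \<in> Aset mS act"
proof -
  obtain z where z: "M = galois_map mS act z" using assms unfolding Aset_def by auto
  have "mm X M = (\<lambda>q t. \<Sum>p\<in>UNIV. \<Sum>a\<in>UNIV. z (p, a) * mm X (gm mS act p a) q t)"
    by (simp add: z galois_gm mm_sum_right mm_sc_right)
  also have "\<dots> \<in> Aset mS act"
    by (intro Aset_sum Aset_sc assms(1)) auto
  finally show ?thesis .
qed

lemma lift_right:
  assumes "\<And>p a. mm (gm mS act p a) X \<in> Aset mS act" and "M \<in> Aset mS act"
  shows "mm M X \<in> Aset mS act"
proof -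
  obtain z where z: "M = galois_map mS act z" using assms unfolding Aset_def by auto
  have "mm M X = (\<lambda>q t. \<Sum>p\<in>UNIV. \<Sum>a\<in>UNIV. z (p, a) * mm (gm mS act p a) X q t)"
    by (simp add: z galois_gm mm_sum_left mm_sc_left)
  also have "\<dots> \<in> Aset mS act"
    by (intro Aset_sum Aset_sc assms(1)) auto
  finally show ?thesis .
qed


lemma M1:
  assumes "module_algebra mH uH dH eH mS uS act"
  shows "mm (act b) (act a) = (\<lambda>q t. \<Sum>c\<in>UNIV. mH a b c * act c q t)"
  using assms unfolding module_algebra_def mm_def by (auto simp: fun_eq_iff)

lemma M3:
  assumes "module_algebra mH uH dH eH mS uS act"
  shows "mm (mS p) (act a) = (\<lambda>q t. \<Sum>b1\<in>UNIV. \<Sum>b2\<in>UNIV. \<Sum>x\<in>UNIV. dH a b1 b2 * act b1 p x * mm (act b2) (mS x) q t)"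
proof (intro ext)
  fix q t
  have ax: "(\<Sum>r\<in>UNIV. mS p q r * act a r t) =
        (\<Sum>b\<in>UNIV. \<Sum>c\<in>UNIV. \<Sum>x\<in>UNIV. \<Sum>y\<in>UNIV. dH a b c * act b p x * act c q y * mS x y t)"
    using assms unfolding module_algebra_def by blast
  show "mm (mS p) (act a) q t = (\<Sum>b1\<in>UNIV. \<Sum>b2\<in>UNIV. \<Sum>x\<in>UNIV. dH a b1 b2 * act b1 p x * mm (act b2) (mS x) q t)"
    unfolding mm_def ax by (simp add: sum_distrib_left mult_ac)
qed

lemma MA:
  assumes "assoc_unital_alg mS uS"
  shows "mm (mS p') (mS p) = (\<lambda>r t. \<Sum>e\<in>UNIV. mS p p' e * mS e r t)"
proof (intro ext)
  fix r t
  have "(\<Sum>e\<in>UNIV. mS p p' e * mS e r t) = (\<Sum>e\<in>UNIV. mS p' r e * mS p e t)"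
    using assms unfolding assoc_unital_alg_def by blast
  then show "mm (mS p') (mS p) r t = (\<Sum>e\<in>UNIV. mS p p' e * mS e r t)"
    by (simp add: mm_def)
qed

context
  fixes mH :: "'i::finite \<Rightarrow> 'i \<Rightarrow> 'i \<Rightarrow> 'k::field" and uH dH eH
    and mS :: "'j::finite \<Rightarrow> 'j \<Rightarrow> 'j \<Rightarrow> 'k" and uS act
  assumes MA0: "module_algebra mH uH dH eH mS uS act" and AS: "assoc_unital_alg mS uS"
begin

lemma C1g: "mm (act b) (gm mS act p a) \<in> Aset mS act"
proof -
  have "mm (act b) (gm mS act p a) = (\<lambda>q t. \<Sum>c\<in>UNIV. mH a b c * gm mS act p c q t)"
    unfolding gm_def mm_assoc[symmetric] M1[OF MA0] by (simp add: mm_sum_left mm_sc_left)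
  also have "\<dots> \<in> Aset mS act" by (intro Aset_sum Aset_sc gm_in) auto
  finally show ?thesis .
qed

lemma C4g: "mm (gm mS act p a) (mS p') \<in> Aset mS act"
proof -
  have "mm (gm mS act p a) (mS p') = (\<lambda>q t. \<Sum>e\<in>UNIV. mS p' p e * gm mS act e a q t)"
    unfolding gm_def mm_assoc MA[OF AS] by (simp add: mm_sum_right mm_sc_right)
  also have "\<dots> \<in> Aset mS act" by (intro Aset_sum Aset_sc gm_in) auto
  finally show ?thesis .
qed

lemma C2g: "mm (mS p') (gm mS act p a) \<in> Aset mS act"
proof -
  have inner: "mm (mm (act b2) (mS x)) (mS p) \<in> Aset mS act" for b2 x
  proof -
    have "mm (mm (act b2) (mS x)) (mS p) = (\<lambda>q t. \<Sum>e\<in>UNIV. mS p x e * gm mS act e b2 q t)"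
      unfolding gm_def mm_assoc MA[OF AS] by (simp add: mm_sum_right mm_sc_right)
    also have "\<dots> \<in> Aset mS act" by (intro Aset_sum Aset_sc gm_in) auto
    finally show ?thesis .
  qed
  have "mm (mS p') (gm mS act p a) = (\<lambda>q t. \<Sum>b1\<in>UNIV. \<Sum>b2\<in>UNIV. \<Sum>x\<in>UNIV.
          dH a b1 b2 * act b1 p' x * mm (mm (act b2) (mS x)) (mS p) q t)"
    unfolding gm_def mm_assoc[symmetric] M3[OF MA0] by (simp add: mm_sum_left mm_sc_left)
  also have "\<dots> \<in> Aset mS act" by (intro Aset_sum Aset_sc inner) auto
  finally show ?thesis .
qed

lemma C3g: "mm (gm mS act p a) (act b) \<in> Aset mS act"
proof -
  have inner: "mm (act a) (mm (act b2) (mS x)) \<in> Aset mS act" for b2 x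
  proof -
    have "mm (act a) (mm (act b2) (mS x)) = (\<lambda>q t. \<Sum>c\<in>UNIV. mH b2 a c * gm mS act x c q t)"
      unfolding gm_def mm_assoc[symmetric] M1[OF MA0] by (simp add: mm_sum_left mm_sc_left)
    also have "\<dots> \<in> Aset mS act" by (intro Aset_sum Aset_sc gm_in) auto
    finally show ?thesis .
  qed
  have "mm (gm mS act p a) (act b) = (\<lambda>q t. \<Sum>b1\<in>UNIV. \<Sum>b2\<in>UNIV. \<Sum>x\<in>UNIV.
          dH b b1 b2 * act b1 p x * mm (act a) (mm (act b2) (mS x)) q t)"
    unfolding gm_def mm_assoc M3[OF MA0] by (simp add: mm_sum_right mm_sc_right)
  also have "\<dots> \<in> Aset mS act" by (intro Aset_sum Aset_sc inner) auto
  finally show ?thesis .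
qed

lemma C_left_act:
  assumes "M \<in> Aset mS act"
  shows "mm (\<lambda>q t. \<Sum>b\<in>UNIV. h b * act b q t) M \<in> Aset mS act"
proof -
  have "mm (\<lambda>q t. \<Sum>b\<in>UNIV. h b * act b q t) M = (\<lambda>q t. \<Sum>b\<in>UNIV. h b * mm (act b) M q t)"
    by (simp add: mm_sum_left mm_sc_left)
  also have "\<dots> \<in> Aset mS act"
    by (rule Aset_sum) (auto intro!: Aset_sc lift_left[OF C1g] assms)
  finally show ?thesis .
qed

lemma C_left_mult:
  assumes "M \<in> Aset mS act"
  shows "mm (\<lambda>q t. \<Sum>p\<in>UNIV. s p * mS p q t) M \<in> Aset mS act"
proof -
  have "mm (\<lambda>q t. \<Sum>p\<in>UNIV. s p * mS p q t) M = (\<lambda>q t. \<Sum>p\<in>UNIV. s p * mm (mS p) M q t)"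
    by (simp add: mm_sum_left mm_sc_left)
  also have "\<dots> \<in> Aset mS act"
    by (rule Aset_sum) (auto intro!: Aset_sc lift_left[OF C2g] assms)
  finally show ?thesis .
qed

lemma C_right_act:
  assumes "M \<in> Aset mS act"
  shows "mm M (\<lambda>q t. \<Sum>b\<in>UNIV. h b * act b q t) \<in> Aset mS act"
proof -
  have "mm M (\<lambda>q t. \<Sum>b\<in>UNIV. h b * act b q t) = (\<lambda>q t. \<Sum>b\<in>UNIV. h b * mm M (act b) q t)"
    by (simp add: mm_sum_right mm_sc_right)
  also have "\<dots> \<in> Aset mS act"
    by (rule Aset_sum) (auto intro!: Aset_sc lift_right[OF C3g] assms)
  finally show ?thesis .
qed

lemma C_right_mult:
  assumes "M \<in> Aset mS act"
  shows "mm M (\<lambda>q t. \<Sum>p\<in>UNIV. s p * mS p q t) \<in> Aset mS act"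
proof -
  have "mm M (\<lambda>q t. \<Sum>p\<in>UNIV. s p * mS p q t) = (\<lambda>q t. \<Sum>p\<in>UNIV. s p * mm M (mS p) q t)"
    by (simp add: mm_sum_right mm_sc_right)
  also have "\<dots> \<in> Aset mS act"
    by (rule Aset_sum) (auto intro!: Aset_sc lift_right[OF C4g] assms)
  finally show ?thesis .
qed

end



lemma vact_expand: "vact act h s t = (\<Sum>q\<in>UNIV. s q * (\<Sum>b\<in>UNIV. h b * act b q t))"
  apply (simp add: vact_def sum_distrib_left)
  apply (subst sum.swap) apply (simp add: mult_ac)
  done

lemma int_inv:
  assumes MOD: "module_algebra mH uH dH eH mS uS act" and lam: "lam \<in> left_integrals mH eH"
  shows "vact act lam s \<in> invariants eH act"
  unfolding invariants_def
proof (intro CollectI allI)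
  fix h
  have "vact act h (vact act lam s) = vact act (vmult mH h lam) s" by (simp add: vact_mult[OF MOD])
  also have "\<dots> = vact act (vsc (veps eH h) lam) s"
    using lam unfolding left_integrals_def vsc_def by simp
  also have "\<dots> = (\<lambda>t. veps eH h * vact act lam s t)" by (simp only: vact_sc1) (simp add: vsc_def)
  finally show "vact act h (vact act lam s) = (\<lambda>t. veps eH h * vact act lam s t)" .
qed

lemma Aset_add:
  assumes "F \<in> Aset mS act" "G \<in> Aset mS act"
  shows "(\<lambda>q t. F q t + G q t) \<in> Aset mS act"
proof -
  obtain z1 z2 where z: "F = galois_map mS act z1" "G = galois_map mS act z2" using assms unfolding Aset_def by auto
  have "(\<lambda>q t. F q t + G q t) = galois_map mS act (\<lambda>pa. z1 pa + z2 pa)"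
    by (simp add: z galois_map_def algebra_simps sum.distrib)
  then show ?thesis unfolding Aset_def by simp
qed

lemma fdv_inst: "finite_dimensional_vector_space (vsc :: 'k::field \<Rightarrow> ('m::finite \<Rightarrow> 'k) \<Rightarrow> ('m \<Rightarrow> 'k)) (range dlt)"
  by (intro finite_dimensional_vector_space.intro vs_fun finite_dimensional_vector_space_axioms.intro
      fdv.finite_Basis fdv.independent_Basis fdv.span_Basis)


lemma kdelta_sum3: "(\<Sum>b\<in>UNIV. kdelta c b * v b) = (v (c::'a::finite) :: 'k::field)"
proof -
  have "\<And>b. kdelta c b * v b = (if c = b then v c else 0)" by (simp add: kdelta_def)
  then show ?thesis by (simp add: sum.delta)
qed

lemma pr_mm: "pr (\<lambda>q. \<Sum>p\<in>UNIV. t p * A p q) (\<lambda>q. \<Sum>r\<in>UNIV. M q r * \<beta> r) = pr t (\<lambda>q. \<Sum>r\<in>UNIV. mm A M q r * \<beta> r)"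
  apply (simp add: pr_def mm_def sum_distrib_left sum_distrib_right)
  apply (simp only: sum.cartesian_product UNIV_Times_UNIV)
  apply (rule sum.reindex_bij_witness[where i="\<lambda>(p,r,q). (q,r,p)" and j="\<lambda>(q,r,p). (p,r,q)"])
  apply (auto simp: mult_ac)
  done

lemma galois_Ls:
  assumes MOD: "module_algebra mH uH dH eH mS uS act"
  shows "galois_map mS act (\<lambda>pa. s (fst pa) * uH (snd pa)) = (\<lambda>q t. \<Sum>p\<in>UNIV. s p * mS p q t)"
proof (intro ext)
  fix q t
  have ax: "\<And>r. (\<Sum>c\<in>UNIV. uH c * act c q r) = kdelta q r"
    using MOD unfolding module_algebra_def by blast
  have "galois_map mS act (\<lambda>pa. s (fst pa) * uH (snd pa)) q t
      = (\<Sum>p\<in>UNIV. s p * (\<Sum>r\<in>UNIV. (\<Sum>c\<in>UNIV. uH c * act c q r) * mS p r t))"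
    apply (simp add: galois_map_def sum_distrib_left sum_distrib_right)
    apply (rule sum.cong[OF refl])
    apply (subst sum.swap) apply (simp add: mult_ac)
    done
  also have "\<dots> = (\<Sum>p\<in>UNIV. s p * mS p q t)" by (simp add: ax kdelta_sum3)
  finally show "galois_map mS act (\<lambda>pa. s (fst pa) * uH (snd pa)) q t = (\<Sum>p\<in>UNIV. s p * mS p q t)" .
qed

lemma pr_unit:
  assumes AS: "assoc_unital_alg mS uS"
  shows "pr (\<lambda>x. c * uS x) (\<lambda>q. \<Sum>r\<in>UNIV. (\<Sum>p\<in>UNIV. s p * mS p q r) * \<beta> r) = c * (\<Sum>r\<in>UNIV. s r * \<beta> r)"
proof -
  have ax: "\<And>p r. (\<Sum>q\<in>UNIV. uS q * mS p q r) = kdelta p r"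
    using AS unfolding assoc_unital_alg_def by blast
  have "pr (\<lambda>x. c * uS x) (\<lambda>q. \<Sum>r\<in>UNIV. (\<Sum>p\<in>UNIV. s p * mS p q r) * \<beta> r)
     = c * (\<Sum>r\<in>UNIV. \<Sum>p\<in>UNIV. s p * \<beta> r * (\<Sum>q\<in>UNIV. uS q * mS p q r))"
    apply (simp add: pr_def sum_distrib_left sum_distrib_right)
    apply (simp only: sum.cartesian_product UNIV_Times_UNIV)
    apply (rule sum.reindex_bij_witness[where i="\<lambda>(r,p,q). (q,r,p)" and j="\<lambda>(q,r,p). (r,p,q)"])
    apply (auto simp: mult_ac)
    done
  also have "\<dots> = c * (\<Sum>r\<in>UNIV. s r * \<beta> r)"
    by (simp add: ax kdelta_def if_distrib sum.delta cong: if_cong)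
  finally show ?thesis .
qed

lemma rank1:
  assumes AS: "assoc_unital_alg mS uS"
    and beta: "\<And>r. Ml r = (\<lambda>t. \<beta> r * uS t)"
  shows "mm (mm M Ml) (\<lambda>q t. \<Sum>p\<in>UNIV. a p * mS p q t) = (\<lambda>q t. (\<Sum>r\<in>UNIV. M q r * \<beta> r) * a t)"
proof (intro ext)
  fix q t
  have ax: "\<And>p. (\<Sum>r\<in>UNIV. uS r * mS p r t) = kdelta p t"
    using AS unfolding assoc_unital_alg_def by blast
  have "mm (mm M Ml) (\<lambda>q t. \<Sum>p\<in>UNIV. a p * mS p q t) q t
      = (\<Sum>r\<in>UNIV. M q r * \<beta> r) * (\<Sum>p\<in>UNIV. a p * (\<Sum>r\<in>UNIV. uS r * mS p r t))"
    unfolding mm_def beta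
    apply (simp add: sum_distrib_left sum_distrib_right)
    apply (simp only: sum.cartesian_product UNIV_Times_UNIV)
    apply (rule sum.reindex_bij_witness[where i="\<lambda>(p,r',r). (r',p,r)" and j="\<lambda>(r',p,r). (p,r',r)"])
    apply (auto simp: mult_ac)
    done
  also have "\<dots> = (\<Sum>r\<in>UNIV. M q r * \<beta> r) * a t" by (simp add: ax kdelta_sum1)
  finally show "mm (mm M Ml) (\<lambda>q t. \<Sum>p\<in>UNIV. a p * mS p q t) q t = (\<Sum>r\<in>UNIV. M q r * \<beta> r) * a t" .
qed

lemma row_dlt: "vact act lam (dlt q) = (\<lambda>t. \<Sum>b\<in>UNIV. lam b * act b q t)"
proof (intro ext)
  fix t
  have "vact act lam (dlt q) t = (\<Sum>p\<in>UNIV. if p = q then (\<Sum>b\<in>UNIV. lam b * act b q t) else 0)"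
    unfolding vact_expand by (rule sum.cong) (auto simp: dlt_def)
  then show "vact act lam (dlt q) t = (\<Sum>b\<in>UNIV. lam b * act b q t)" by (simp add: sum.delta)
qed


theorem mainTheorem3:
  fixes mH :: "'i::finite \<Rightarrow> 'i \<Rightarrow> 'i \<Rightarrow> 'k::field"
    and uH :: "'i \<Rightarrow> 'k" and dH :: "'i \<Rightarrow> 'i \<Rightarrow> 'i \<Rightarrow> 'k" and eH :: "'i \<Rightarrow> 'k"
    and sH :: "'i \<Rightarrow> 'i \<Rightarrow> 'k"
    and mS :: "'j::finite \<Rightarrow> 'j \<Rightarrow> 'j \<Rightarrow> 'k" and uS :: "'j \<Rightarrow> 'k"
    and act :: "'i \<Rightarrow> 'j \<Rightarrow> 'j \<Rightarrow> 'k"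
  assumes "hopf_algebra mH uH dH eH sH"
    and "local_alg mH uH"
    and "cocommutative dH"
    and "H_extension mH uH dH eH mS uS act"
    and "faithful_action act"
    and "card (UNIV :: 'i set) = card (UNIV :: 'j set)"
  shows "hopf_galois mS act \<longleftrightarrow> hopfological_homology_zero mH eH act"
proof -
  have AH: "assoc_unital_alg mH uH" and BC: "bialg_compat mH uH dH eH"
    using assms(1) unfolding hopf_algebra_def by auto
  have AS: "assoc_unital_alg mS uS" and MOD: "module_algebra mH uH dH eH mS uS act"
    and INV: "invariants eH act = scalars uS"
    using assms(4) unfolding H_extension_def by auto
  have LOC: "local_alg mH uH" by (rule assms(2))
  have uH0: "uH \<noteq> 0" using LOC unfolding local_alg_def by (simp add: zero_fun_def)
  have "\<exists>v\<in>(UNIV :: ('i \<Rightarrow> 'k) set). v \<noteq> 0 \<and> (\<forall>h. vmult mH h v = vsc (veps eH h) v)"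
    by (rule fixed_vec[OF vmult_add1 vmult_sc1 vmult_zero2 vmult_assoc[OF AH] vmult_unit_left[OF AH]
          local_inv[OF AH BC LOC] veps_mult[OF BC] veps_unit[OF BC] fv.subspace_UNIV _ _ uH0]) auto
  then obtain lam where lam0: "lam \<noteq> 0" and lamI0: "\<And>h. vmult mH h lam = vsc (veps eH h) lam" by blast
  have lamI: "lam \<in> left_integrals mH eH" using lamI0 unfolding left_integrals_def vsc_def by simp
  obtain s0 where s0: "vact act lam s0 \<noteq> (\<lambda>_. 0)"
    using assms(5) lam0 unfolding faithful_action_def zero_fun_def by auto
  have lam_sc: "vact act lam s \<in> scalars uS" for s using int_inv[OF MOD lamI] INV by simp
  define Ml where "Ml = (\<lambda>q t. \<Sum>b\<in>UNIV. lam b * act b q t)"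
  have "\<forall>q. \<exists>c. Ml q = (\<lambda>t. c * uS t)"
  proof
    fix q show "\<exists>c. Ml q = (\<lambda>t. c * uS t)"
      using lam_sc[of "dlt q"] unfolding row_dlt scalars_def Ml_def by auto
  qed
  then have "\<exists>\<beta>. \<forall>q. Ml q = (\<lambda>t. \<beta> q * uS t)" by (rule choice)
  then obtain \<beta> where beta0: "\<forall>q. Ml q = (\<lambda>t. \<beta> q * uS t)" by (elim exE)
  then have beta: "\<And>q. Ml q = (\<lambda>t. \<beta> q * uS t)" by blast
  have vact_lam: "vact act lam s = (\<lambda>t. (\<Sum>q\<in>UNIV. s q * \<beta> q) * uS t)" for s
  proof (intro ext)
    fix t
    have "vact act lam s t = (\<Sum>q\<in>UNIV. s q * Ml q t)" unfolding vact_expand Ml_def ..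
    also have "\<dots> = (\<Sum>q\<in>UNIV. s q * \<beta> q) * uS t" by (simp add: beta sum_distrib_right sum_distrib_left mult_ac)
    finally show "vact act lam s t = (\<Sum>q\<in>UNIV. s q * \<beta> q) * uS t" .
  qed
  define c0 where "c0 = (\<Sum>q\<in>UNIV. s0 q * \<beta> q)"
  have c0: "c0 \<noteq> 0" using s0 unfolding vact_lam c0_def by auto
  have RHS: "hopfological_homology_zero mH eH act"
    unfolding hopfological_homology_zero_def
  proof
    show "invariants eH act \<subseteq> integral_image mH eH act"
    proof
      fix v assume "v \<in> invariants eH act"
      then obtain c where v: "v = (\<lambda>t. c * uS t)" using INV unfolding scalars_def by auto
      have "vact act lam (vsc (c / c0) s0) = vsc (c / c0) (vact act lam s0)" by (rule vact_sc2)
      also have "\<dots> = (\<lambda>t. (c / c0) * (c0 * uS t))" by (simp add: vsc_def vact_lam c0_def)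
      also have "\<dots> = v" using c0 by (simp add: v fun_eq_iff)
      finally have "v = (\<lambda>t. \<Sum>i<(1::nat). vact act ((\<lambda>_. lam) i) ((\<lambda>_. vsc (c / c0) s0) i) t)"
        by simp
      then show "v \<in> integral_image mH eH act" unfolding integral_image_def
        apply (intro CollectI exI[where x="1::nat"] exI[where x="\<lambda>_::nat. lam"] exI[where x="\<lambda>_::nat. vsc (c / c0) s0"])
        using lamI by simp
    qed
  next
    show "integral_image mH eH act \<subseteq> invariants eH act"
    proof
      fix v assume "v \<in> integral_image mH eH act"
      then obtain n lams ss where lams: "\<forall>i<n. lams i \<in> left_integrals mH eH"
        and v: "v = (\<lambda>t. \<Sum>i<(n::nat). vact act (lams i) (ss i) t)"
        unfolding integral_image_def by blast
      have "\<forall>i. \<exists>c. i < n \<longrightarrow> vact act (lams i) (ss i) = (\<lambda>t. c * uS t)"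
      proof
        fix i show "\<exists>c. i < n \<longrightarrow> vact act (lams i) (ss i) = (\<lambda>t. c * uS t)"
        proof (cases "i < n")
          case True
          then have "vact act (lams i) (ss i) \<in> scalars uS" using int_inv[OF MOD] lams INV by auto
          then show ?thesis unfolding scalars_def by auto
        qed simp
      qed
      then have "\<exists>cs. \<forall>i. i < n \<longrightarrow> vact act (lams i) (ss i) = (\<lambda>t. cs i * uS t)" by (rule choice)
      then obtain cs where cs: "\<forall>i. i < n \<longrightarrow> vact act (lams i) (ss i) = (\<lambda>t. cs i * uS t)" by (elim exE)
      have "v = (\<lambda>t. (\<Sum>i<n. cs i) * uS t)"
        unfolding v sum_distrib_right using cs by (intro ext sum.cong) auto
      then show "v \<in> invariants eH act" using INV unfolding scalars_def by auto
    qed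
  qed
  define W where "W = {w. \<exists>M\<in>Aset mS act. w = (\<lambda>q. \<Sum>r\<in>UNIV. M q r * \<beta> r)}"
  have subW: "fv.subspace W"
    unfolding fv.subspace_def
  proof (intro conjI ballI allI)
    have "(\<lambda>q t. 0 * gm mS act undefined undefined q t) \<in> Aset mS act" by (intro Aset_sc gm_in)
    then show "0 \<in> W" unfolding W_def by (force simp: zero_fun_def)
  next
    fix x y assume "x \<in> W" "y \<in> W"
    then obtain M1 M2 where M: "M1 \<in> Aset mS act" "M2 \<in> Aset mS act"
      and xy: "x = (\<lambda>q. \<Sum>r\<in>UNIV. M1 q r * \<beta> r)" "y = (\<lambda>q. \<Sum>r\<in>UNIV. M2 q r * \<beta> r)"
      unfolding W_def by blast
    have "x + y = (\<lambda>q. \<Sum>r\<in>UNIV. (M1 q r + M2 q r) * \<beta> r)"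
      by (simp add: xy fun_eq_iff algebra_simps sum.distrib)
    then show "x + y \<in> W" unfolding W_def using Aset_add[OF M]
      by (intro CollectI bexI[where x="\<lambda>q t. M1 q t + M2 q t"]) auto
  next
    fix c x assume "x \<in> W"
    then obtain M where M: "M \<in> Aset mS act" and x: "x = (\<lambda>q. \<Sum>r\<in>UNIV. M q r * \<beta> r)"
      unfolding W_def by blast
    have "vsc c x = (\<lambda>q. \<Sum>r\<in>UNIV. (c * M q r) * \<beta> r)"
      by (simp add: x vsc_def fun_eq_iff sum_distrib_left mult_ac)
    then show "vsc c x \<in> W" unfolding W_def using Aset_sc[OF M]
      by (intro CollectI bexI[where x="\<lambda>q t. c * M q t"]) auto
  qed
  have ann: "t = 0" if tW: "\<forall>w\<in>W. pr t w = 0" for t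
  proof (rule ccontr)
    assume t0: "t \<noteq> 0"
    define U where "U = {t. \<forall>w\<in>W. pr t w = 0}"
    have subU: "fv.subspace U"
      unfolding fv.subspace_def U_def
      by (auto simp: pr_def vsc_def algebra_simps sum.distrib sum_distrib_left[symmetric])
    have stU: "vact act h x \<in> U" if "x \<in> U" for h x
    proof -
      have "pr (vact act h x) w = 0" if "w \<in> W" for w
      proof -
        obtain M where M: "M \<in> Aset mS act" and w: "w = (\<lambda>q. \<Sum>r\<in>UNIV. M q r * \<beta> r)"
          using \<open>w \<in> W\<close> unfolding W_def by blast
        have "mm (\<lambda>q t. \<Sum>b\<in>UNIV. h b * act b q t) M \<in> Aset mS act"
          by (rule C_left_act[OF MOD AS M])
        then have "(\<lambda>q. \<Sum>r\<in>UNIV. mm (\<lambda>q t. \<Sum>b\<in>UNIV. h b * act b q t) M q r * \<beta> r) \<in> W"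
          unfolding W_def by blast
        then have "pr x (\<lambda>q. \<Sum>r\<in>UNIV. mm (\<lambda>q t. \<Sum>b\<in>UNIV. h b * act b q t) M q r * \<beta> r) = 0"
          using \<open>x \<in> U\<close> unfolding U_def by blast
        moreover have "vact act h x = (\<lambda>q. \<Sum>p\<in>UNIV. x p * (\<lambda>q t. \<Sum>b\<in>UNIV. h b * act b q t) p q)"
          by (simp add: vact_expand fun_eq_iff)
        ultimately show ?thesis unfolding w by (simp add: pr_mm)
      qed
      then show ?thesis unfolding U_def by blast
    qed
    have tU: "t \<in> U" using tW unfolding U_def by blast
    have "\<exists>v\<in>U. v \<noteq> 0 \<and> (\<forall>h. vact act h v = vsc (veps eH h) v)"
      by (rule fixed_vec[OF vact_add1 vact_sc1 vact_zero2 vact_mult[OF MOD] vact_unit[OF MOD]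
          local_inv[OF AH BC LOC] veps_mult[OF BC] veps_unit[OF BC] subU stU tU t0])
    then obtain v where vU: "v \<in> U" and v0: "v \<noteq> 0" and vinv: "\<forall>h. vact act h v = vsc (veps eH h) v" by blast
    have "v \<in> invariants eH act" using vinv unfolding invariants_def vsc_def by simp
    then obtain c where vc: "v = (\<lambda>x. c * uS x)" using INV unfolding scalars_def by auto
    have cnz: "c \<noteq> 0" using v0 vc by (auto simp: zero_fun_def)
    define Ls where "Ls = (\<lambda>q t. \<Sum>p\<in>UNIV. s0 p * mS p q t)"
    have "Ls \<in> Aset mS act" unfolding Aset_def Ls_def galois_Ls[OF MOD, symmetric] by simp
    then have "(\<lambda>q. \<Sum>r\<in>UNIV. Ls q r * \<beta> r) \<in> W" unfolding W_def by blast
    then have "pr v (\<lambda>q. \<Sum>r\<in>UNIV. Ls q r * \<beta> r) = 0" using vU unfolding U_def by blast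
    moreover have "pr v (\<lambda>q. \<Sum>r\<in>UNIV. Ls q r * \<beta> r) = c * c0"
      unfolding vc Ls_def c0_def by (rule pr_unit[OF AS])
    ultimately show False using cnz c0 by simp
  qed
  have WU: "W = UNIV" by (rule annih_full[OF subW]) (use ann in blast)
  have Ml_in: "mm M Ml \<in> Aset mS act" if "M \<in> Aset mS act" for M
    unfolding Ml_def by (rule C_right_act[OF MOD AS that])
  have R1: "(\<lambda>q t. (\<Sum>r\<in>UNIV. M q r * \<beta> r) * a t) \<in> Aset mS act" if "M \<in> Aset mS act" for M a
  proof -
    have "mm (mm M Ml) (\<lambda>q t. \<Sum>p\<in>UNIV. a p * mS p q t) \<in> Aset mS act"
      by (rule C_right_mult[OF MOD AS Ml_in[OF that]])
    then show ?thesis unfolding rank1[OF AS beta] .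
  qed
  have surjG: "surj (galois_map mS act)"
  proof -
    have "N \<in> Aset mS act" for N
    proof -
      have "\<forall>q. \<exists>M. M \<in> Aset mS act \<and> dlt q = (\<lambda>q'. \<Sum>r\<in>UNIV. M q' r * \<beta> r)"
        using WU unfolding W_def by blast
      then have "\<exists>Mf. \<forall>q. Mf q \<in> Aset mS act \<and> dlt q = (\<lambda>q'. \<Sum>r\<in>UNIV. Mf q q' r * \<beta> r)" by (rule choice)
      then obtain Mf where Mf: "\<forall>q. Mf q \<in> Aset mS act \<and> dlt q = (\<lambda>q'. \<Sum>r\<in>UNIV. Mf q q' r * \<beta> r)" by (elim exE)
      have Rq: "(\<lambda>q' t. dlt q q' * N q t) \<in> Aset mS act" for q
      proof -
        have "(\<lambda>q' t. (\<Sum>r\<in>UNIV. Mf q q' r * \<beta> r) * N q t) \<in> Aset mS act" using R1 Mf by blast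
        moreover have "(\<lambda>q' t. (\<Sum>r\<in>UNIV. Mf q q' r * \<beta> r) * N q t) = (\<lambda>q' t. dlt q q' * N q t)"
          using Mf by (metis (no_types, lifting))
        ultimately show ?thesis by simp
      qed
      have "(\<lambda>q' t. \<Sum>q\<in>UNIV. dlt q q' * N q t) \<in> Aset mS act"
        by (rule Aset_sum) (use Rq in auto)
      moreover have "(\<lambda>q' t. \<Sum>q\<in>UNIV. dlt q q' * N q t) = N"
      proof (intro ext)
        fix q' t
        have "(\<Sum>q\<in>UNIV. dlt q q' * N q t) = (\<Sum>q\<in>UNIV. if q' = q then N q t else 0)"
          by (rule sum.cong) (auto simp: dlt_def)
        then show "(\<Sum>q\<in>UNIV. dlt q q' * N q t) = N q' t" by (simp add: sum.delta)
      qed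
      ultimately show ?thesis by simp
    qed
    then show ?thesis unfolding Aset_def by blast
  qed
  define g where "g z = (\<lambda>(q, t). galois_map mS act z q t)" for z
  have lin_g: "Vector_Spaces.linear vsc vsc g"
    unfolding Vector_Spaces.linear_iff
  proof (intro conjI allI vs_fun)
    fix x y show "g (x + y) = g x + g y"
      by (auto simp: g_def galois_map_def fun_eq_iff algebra_simps sum.distrib)
  next
    fix c x show "g (vsc c x) = vsc c (g x)"
      by (auto simp: g_def galois_map_def vsc_def fun_eq_iff algebra_simps sum_distrib_left)
  qed
  have surj_g: "surj g"
  proof -
    have "f \<in> range g" for f :: "'j \<times> 'j \<Rightarrow> 'k"
    proof -
      obtain z where "galois_map mS act z = (\<lambda>q t. f (q, t))" using surjG by (metis surj_def)
      then have "g z = f" by (auto simp: g_def fun_eq_iff)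
      then show ?thesis by blast
    qed
    then show ?thesis by blast
  qed
  interpret pair: finite_dimensional_vector_space_pair
    "vsc :: 'k \<Rightarrow> ('j \<times> 'i \<Rightarrow> 'k) \<Rightarrow> _" "range dlt" "vsc :: 'k \<Rightarrow> ('j \<times> 'j \<Rightarrow> 'k) \<Rightarrow> _" "range dlt"
    unfolding finite_dimensional_vector_space_pair_def by (simp add: fdv_inst)
  have dims: "fv.dim (UNIV :: ('j \<times> 'j \<Rightarrow> 'k) set) = fv.dim (UNIV :: ('j \<times> 'i \<Rightarrow> 'k) set)"
  proof -
    have e1: "fv.dim (UNIV :: ('j \<times> 'j \<Rightarrow> 'k) set) = card (UNIV :: ('j \<times> 'j) set)" by (rule fdv_dim)
    have e2: "fv.dim (UNIV :: ('j \<times> 'i \<Rightarrow> 'k) set) = card (UNIV :: ('j \<times> 'i) set)" by (rule fdv_dim)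
    have e3: "card (UNIV :: ('j \<times> 'j) set) = card (UNIV :: 'j set) * card (UNIV :: 'j set)"
      by (metis UNIV_Times_UNIV card_cartesian_product)
    have e4: "card (UNIV :: ('j \<times> 'i) set) = card (UNIV :: 'j set) * card (UNIV :: 'i set)"
      by (metis UNIV_Times_UNIV card_cartesian_product)
    show ?thesis using e1 e2 e3 e4 assms(6) by simp
  qed
  have "inj g" by (rule pair.linear_surjective_imp_injective[OF lin_g surj_g dims])
  then have injG: "inj (galois_map mS act)"
    unfolding inj_def g_def by (metis (mono_tags, lifting) case_prod_conv ext)
  have LHS: "hopf_galois mS act" unfolding hopf_galois_def bij_def using injG surjG by blast
  show ?thesis using LHS RHS by blast
qed


end
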